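(* Let $N$ be a positive integer, $R\in\{0,\dots,N\}$, $n\in\{1,\dots,N\}$, and let $X$ have the hypergeometric distribution $\Pr\{X=x\}=\binom Rx\binom{N-R}{n-x}/\binom Nn$ for $x\in\{0,\dots,n\}$ with $x\le R$ and $n-x\le N-R$, and $\Pr\{X=x\}=0$ for other $x\in\{0,\dots,n\}$. Let $r\in\{0,\dots,n\}$ with $R+n-N\le r\le R$, and let $\mathscr{A}=\{\vartheta\in\mathbb{Z}^+:r\le\vartheta\le R\}$, $\mathscr{B}=\{\vartheta\in\mathbb{Z}^+:R\le\vartheta\le r+N-n\}$. Then $$\Pr\{X\le r\}\le\frac{\binom Rr\binom{N-R}{n-r}}{\binom\vartheta r\binom{N-\vartheta}{n-r}}\ \text{ for }\vartheta\in\mathscr{A},\qquad \Pr\{X\ge r\}\le\frac{\binom Rr\binom{N-R}{n-r}}{\binom\vartheta r\binom{N-\vartheta}{n-r}}\ \text{ for }\vartheta\in\mathscr{B}.$$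
   Context: $\mathbb{Z}^+$ denotes the set of nonnegative integers. *)

theory Defs
  imports Complex_Main
begin

definition hyp_pmf :: "nat \<Rightarrow> nat \<Rightarrow> nat \<Rightarrow> nat \<Rightarrow> real" where
  "hyp_pmf N R n x =
     (if x \<le> n \<and> x \<le> R \<and> n - x \<le> N - R
      then real (R choose x) * real ((N - R) choose (n - x)) / real (N choose n)
      else 0)"

definition hyp_cdf_le :: "nat \<Rightarrow> nat \<Rightarrow> nat \<Rightarrow> nat \<Rightarrow> real" where
  "hyp_cdf_le N R n r = (\<Sum>x\<in>{0..n}. if x \<le> r then hyp_pmf N R n x else 0)"

definition hyp_cdf_ge :: "nat \<Rightarrow> nat \<Rightarrow> nat \<Rightarrow> nat \<Rightarrow> real" where
  "hyp_cdf_ge N R n r = (\<Sum>x\<in>{0..n}. if r \<le> x then hyp_pmf N R n x else 0)"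

end

theory Submission
  imports Defs
begin

lemma choose_step: "Suc k * (a choose Suc k) = (a - k) * (a choose k)"
proof (cases a)
  case 0 then show ?thesis by simp
next
  case (Suc a')
  then show ?thesis using Suc_times_binomial[of k a'] binomial_absorb_comp[of a k] by simp
qed

lemma choose_tp2:
  assumes "a \<le> b" "m \<le> k"
  shows "(a choose k) * (b choose m) \<le> (a choose m) * (b choose k)"
  using assms(2)
proof (induction k rule: dec_induct)
  case base then show ?case by (simp add: mult.commute)
next
  case (step k)
  have "Suc k * ((a choose Suc k) * (b choose m)) = ((a choose k) * (b choose m)) * (a - k)"
    by (simp only: mult.assoc[symmetric] choose_step) (simp add: ac_simps)
  also have "\<dots> \<le> ((a choose m) * (b choose k)) * (b - k)"
    using step.IH assms(1) by (simp add: mult_le_mono diff_le_mono)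
  also have "\<dots> = Suc k * ((a choose m) * (b choose Suc k))"
  proof -
    have "Suc k * ((a choose m) * (b choose Suc k)) = (a choose m) * (Suc k * (b choose Suc k))"
      by (simp only: ac_simps)
    also have "\<dots> = (a choose m) * ((b - k) * (b choose k))" by (simp only: choose_step)
    finally show ?thesis by (simp only: ac_simps)
  qed
  finally show ?case by (metis mult_le_cancel1 zero_less_Suc)
qed

lemma sum_bound:
  fixes N R n r \<theta> :: nat and P :: "nat \<Rightarrow> bool"
  assumes "\<theta> \<le> N" "n \<le> N"
    and D: "0 < (\<theta> choose r) * ((N - \<theta>) choose (n - r))"
    and key: "\<And>x. x \<le> n \<Longrightarrow> P x \<Longrightarrow>
       (R choose x) * ((N - R) choose (n - x)) * ((\<theta> choose r) * ((N - \<theta>) choose (n - r)))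
       \<le> (R choose r) * ((N - R) choose (n - r)) * ((\<theta> choose x) * ((N - \<theta>) choose (n - x)))"
  shows "(\<Sum>x\<in>{0..n}. if P x then hyp_pmf N R n x else 0) \<le>
     real (R choose r) * real ((N - R) choose (n - r))
              / (real (\<theta> choose r) * real ((N - \<theta>) choose (n - r)))"
proof -
  define K where "K = real (R choose r) * real ((N - R) choose (n - r))
              / (real (\<theta> choose r) * real ((N - \<theta>) choose (n - r)))"
  define Dr where "Dr = real (\<theta> choose r) * real ((N - \<theta>) choose (n - r))"
  have Dp: "Dr > 0" unfolding Dr_def using D by (metis of_nat_0_less_iff of_nat_mult)
  have K0: "K \<ge> 0" unfolding K_def by simp
  have CN: "real (N choose n) > 0" using assms by simp
  have trm: "(if P x then hyp_pmf N R n x else 0)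
      \<le> K * (real ((\<theta> choose x) * ((N - \<theta>) choose (n - x))) / real (N choose n))"
    if "x \<in> {0..n}" for x
  proof (cases "P x \<and> x \<le> R \<and> n - x \<le> N - R")
    case True
    have "real ((R choose x) * ((N - R) choose (n - x))) * Dr
       \<le> real ((R choose r) * ((N - R) choose (n - r)) * ((\<theta> choose x) * ((N - \<theta>) choose (n - x))))"
      using key[of x] that True unfolding Dr_def
      by (metis atLeastAtMost_iff of_nat_le_iff of_nat_mult)
    then have "real ((R choose x) * ((N - R) choose (n - x)))
       \<le> K * real ((\<theta> choose x) * ((N - \<theta>) choose (n - x)))"
      using Dp unfolding K_def Dr_def[symmetric] by (simp add: field_simps)
    then have "real ((R choose x) * ((N - R) choose (n - x))) / real (N choose n)
       \<le> K * real ((\<theta> choose x) * ((N - \<theta>) choose (n - x))) / real (N choose n)"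
      using CN by (simp add: divide_right_mono)
    then show ?thesis using True that by (simp add: hyp_pmf_def)
  next
    case False
    then have "(if P x then hyp_pmf N R n x else 0) = 0" by (auto simp: hyp_pmf_def)
    then show ?thesis using K0 CN by simp
  qed
  have "(\<Sum>x\<in>{0..n}. if P x then hyp_pmf N R n x else 0)
     \<le> (\<Sum>x\<in>{0..n}. K * (real ((\<theta> choose x) * ((N - \<theta>) choose (n - x))) / real (N choose n)))"
    by (rule sum_mono) (rule trm)
  also have "\<dots> = K * (real (\<Sum>x\<le>n. (\<theta> choose x) * ((N - \<theta>) choose (n - x))) / real (N choose n))"
    by (simp add: sum_distrib_left sum_divide_distrib atLeast0AtMost)
  also have "(\<Sum>x\<le>n. (\<theta> choose x) * ((N - \<theta>) choose (n - x))) = N choose n"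
    using vandermonde[of \<theta> "N - \<theta>" n] assms(1) by simp
  also have "K * (real (N choose n) / real (N choose n)) = K" using CN by simp
  finally show ?thesis unfolding K_def .
qed

theorem lemma6:
  fixes N R n r :: nat
  assumes "0 < N" and "R \<le> N" and "1 \<le> n" and "n \<le> N"
    and "r \<le> n" and "int R + int n - int N \<le> int r" and "r \<le> R"
  shows "(\<forall>\<theta>::nat. r \<le> \<theta> \<and> \<theta> \<le> R \<longrightarrow>
            hyp_cdf_le N R n r \<le>
              real (R choose r) * real ((N - R) choose (n - r))
              / (real (\<theta> choose r) * real ((N - \<theta>) choose (n - r))))
       \<and> (\<forall>\<theta>::nat. R \<le> \<theta> \<and> \<theta> \<le> r + N - n \<longrightarrow>
            hyp_cdf_ge N R n r \<le>
              real (R choose r) * real ((N - R) choose (n - r))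
              / (real (\<theta> choose r) * real ((N - \<theta>) choose (n - r))))"
proof (intro conjI allI impI)
  fix \<theta> :: nat assume th: "r \<le> \<theta> \<and> \<theta> \<le> R"
  have "n - r \<le> N - \<theta>" using th assms by linarith
  then have D: "0 < (\<theta> choose r) * ((N - \<theta>) choose (n - r))"
    using th assms by (simp add: zero_less_binomial)
  show "hyp_cdf_le N R n r \<le> real (R choose r) * real ((N - R) choose (n - r))
              / (real (\<theta> choose r) * real ((N - \<theta>) choose (n - r)))"
    unfolding hyp_cdf_le_def
  proof (rule sum_bound[OF _ assms(4) D])
    show "\<theta> \<le> N" using th assms by linarith
    fix x assume x: "x \<le> n" "x \<le> r"
    have A: "(\<theta> choose r) * (R choose x) \<le> (\<theta> choose x) * (R choose r)"
      using choose_tp2[of \<theta> R x r] th x by simp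
    have B: "((N - R) choose (n - x)) * ((N - \<theta>) choose (n - r)) \<le> ((N - R) choose (n - r)) * ((N - \<theta>) choose (n - x))"
      using choose_tp2[of "N - R" "N - \<theta>" "n - r" "n - x"] th x by (meson diff_le_mono2)
    have "((\<theta> choose r) * (R choose x)) * (((N - R) choose (n - x)) * ((N - \<theta>) choose (n - r)))
       \<le> ((\<theta> choose x) * (R choose r)) * (((N - R) choose (n - r)) * ((N - \<theta>) choose (n - x)))"
      using A B by (rule mult_mono) auto
    then show "(R choose x) * ((N - R) choose (n - x)) * ((\<theta> choose r) * ((N - \<theta>) choose (n - r)))
       \<le> (R choose r) * ((N - R) choose (n - r)) * ((\<theta> choose x) * ((N - \<theta>) choose (n - x)))"
      by (simp add: ac_simps)
  qed
next
  fix \<theta> :: nat assume th: "R \<le> \<theta> \<and> \<theta> \<le> r + N - n"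
  have "n - r \<le> N - \<theta>" using th assms by linarith
  then have D: "0 < (\<theta> choose r) * ((N - \<theta>) choose (n - r))"
    using th assms by (simp add: zero_less_binomial)
  show "hyp_cdf_ge N R n r \<le> real (R choose r) * real ((N - R) choose (n - r))
              / (real (\<theta> choose r) * real ((N - \<theta>) choose (n - r)))"
    unfolding hyp_cdf_ge_def
  proof (rule sum_bound[OF _ assms(4) D])
    show "\<theta> \<le> N" using th assms by linarith
    fix x assume x: "x \<le> n" "r \<le> x"
    have A: "(R choose x) * (\<theta> choose r) \<le> (R choose r) * (\<theta> choose x)"
      using choose_tp2[of R \<theta> r x] th x by simp
    have B: "((N - \<theta>) choose (n - r)) * ((N - R) choose (n - x)) \<le> ((N - \<theta>) choose (n - x)) * ((N - R) choose (n - r))"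
      using choose_tp2[of "N - \<theta>" "N - R" "n - x" "n - r"] th x by (meson diff_le_mono2)
    have "((R choose x) * (\<theta> choose r)) * (((N - \<theta>) choose (n - r)) * ((N - R) choose (n - x)))
       \<le> ((R choose r) * (\<theta> choose x)) * (((N - \<theta>) choose (n - x)) * ((N - R) choose (n - r)))"
      using A B by (rule mult_mono) auto
    then show "(R choose x) * ((N - R) choose (n - x)) * ((\<theta> choose r) * ((N - \<theta>) choose (n - r)))
       \<le> (R choose r) * ((N - R) choose (n - r)) * ((\<theta> choose x) * ((N - \<theta>) choose (n - x)))"
      by (simp add: ac_simps)
  qed
qed

end
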